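(* Let $d\ge 3$ be odd, $n=\frac{d^2+1}{2}$, and consider the $[[d^2+1,2,d]]$ generalized bicycle code defined by $a(x)=1+x$, $b(x)=1+x^d$. If all syndrome extractions are performed using the RL pattern, the effective distance of the code is $d$.
   Context: $R_n=\mathbb{F}_2[x]/\langle x^n-1\rangle$, vectors of $\mathbb{F}_2^{2n}$ are pairs $(u,v)$ of elements of $R_n$ (left half, right half), weight = number of nonzero coefficients. Code spaces: $C_2=\{(c(1+x),c(1+x^d))\}$ (X-stabilizers), $C_1=\{(u,v):u(1+x^d)+v(1+x)=0\}$, $C_2'=\{(c(1+x^{-d}),c(1+x^{-1}))\}$ (Z-stabilizers), $C_1'=\{(u,v):u(1+x^{-1})+v(1+x^{-d})=0\}$, $x^{-1}=x^{n-1}$; undetectable X- (resp. Z-) logical errors are elements of $C_1\setminus C_2$ (resp. $C_1'\setminus C_2'$). Each check $x^i(1+x,1+x^d)$ (left qubits $i,i+1$; right qubits $i,i+d$) and $x^i(1+x^{-d},1+x^{-1})$ is measured with one ancilla via four CNOTs. In the RL pattern the ancilla first interacts with the check's two right-half qubits and then with its two left-half qubits, so a single ancilla fault between the two halves propagates to errors of the check's type on its two left-half qubits, i.e. $(x^i(1+x),0)$ for X-checks and $(x^i(1+x^{-d}),0)$ for Z-checks; any other single ancilla fault is equivalent to at most one data-qubit error. The effective distance is the minimum number of faults producing an undetectable logical error, namely the minimum of $\mathrm{wt}(j)+\mathrm{wt}(u)+\mathrm{wt}(v)$ over $j,u,v\in R_n$ with $(u+j(x)(1+x),v)\in C_1\setminus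 C_2$ or $(u+j(x)(1+x^{-d}),v)\in C_1'\setminus C_2'$. *)

theory Defs
  imports "HOL-Library.Z2" "HOL-Computational_Algebra.Polynomial"
begin

text \<open>The ring R_n = F_2[x]/(x^n - 1): elements are represented by their canonical
  representatives, polynomials over F_2 (type bit) of degree < n; the ring product is
  the polynomial product reduced modulo x^n - 1.\<close>

definition cyc_mod :: "nat \<Rightarrow> bit poly" where
  "cyc_mod n = monom 1 n - 1"

definition Rn :: "nat \<Rightarrow> bit poly set" where
  "Rn n = {p. p mod cyc_mod n = p}"

definition rmul :: "nat \<Rightarrow> bit poly \<Rightarrow> bit poly \<Rightarrow> bit poly" where
  "rmul n p q = (p * q) mod cyc_mod n"

definition radd :: "nat \<Rightarrow> bit poly \<Rightarrow> bit poly \<Rightarrow> bit poly" where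
  "radd n p q = (p + q) mod cyc_mod n"

text \<open>x^k in R_n (exponent taken mod n, so x^{-k} = x^{n-k})\<close>
definition xpow :: "nat \<Rightarrow> nat \<Rightarrow> bit poly" where
  "xpow n k = monom 1 (k mod n)"

definition wt :: "bit poly \<Rightarrow> nat" where
  "wt p = card {i. coeff p i \<noteq> 0}"

text \<open>Code spaces (parameters n, d).  Here xinv_d = x^{-d} = x^{n-d}, xinv_1 = x^{-1} = x^{n-1}.\<close>
definition C2 :: "nat \<Rightarrow> nat \<Rightarrow> (bit poly \<times> bit poly) set" where
  "C2 n d = {(rmul n c (1 + xpow n 1), rmul n c (1 + xpow n d)) | c. c \<in> Rn n}"

definition C1 :: "nat \<Rightarrow> nat \<Rightarrow> (bit poly \<times> bit poly) set" where
  "C1 n d = {(u, v). u \<in> Rn n \<and> v \<in> Rn n \<and>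
     radd n (rmul n u (1 + xpow n d)) (rmul n v (1 + xpow n 1)) = 0}"

definition C2' :: "nat \<Rightarrow> nat \<Rightarrow> (bit poly \<times> bit poly) set" where
  "C2' n d = {(rmul n c (1 + xpow n (n - d mod n)), rmul n c (1 + xpow n (n - 1 mod n))) | c. c \<in> Rn n}"

definition C1' :: "nat \<Rightarrow> nat \<Rightarrow> (bit poly \<times> bit poly) set" where
  "C1' n d = {(u, v). u \<in> Rn n \<and> v \<in> Rn n \<and>
     radd n (rmul n u (1 + xpow n (n - 1 mod n))) (rmul n v (1 + xpow n (n - d mod n))) = 0}"

text \<open>Fault configurations producing an undetectable logical error under the RL pattern:
  j = hook (ancilla) faults, u, v = data-qubit errors.\<close>
definition bad_fault :: "nat \<Rightarrow> nat \<Rightarrow> bit poly \<Rightarrow> bit poly \<Rightarrow> bit poly \<Rightarrow> bool" where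
  "bad_fault n d j u v \<longleftrightarrow> j \<in> Rn n \<and> u \<in> Rn n \<and> v \<in> Rn n \<and>
     ((radd n u (rmul n j (1 + xpow n 1)), v) \<in> C1 n d - C2 n d \<or>
      (radd n u (rmul n j (1 + xpow n (n - d mod n))), v) \<in> C1' n d - C2' n d)"

definition eff_dist :: "nat \<Rightarrow> nat \<Rightarrow> nat" where
  "eff_dist n d = Inf {wt j + wt u + wt v | j u v. bad_fault n d j u v}"

end

theory Submission
  imports Defs
begin



declare add_bit_eq_xor[simp del] mult_bit_eq_and[simp del]

lemma bit_add_self[simp]: "(x::bit) + x = 0" by (cases x) simp_all
lemma bit_add_self2[simp]: "(x::bit) + (x + y) = y" by (cases x; cases y) simp_all
lemma bit_add_eq0: "((a::bit) + b = 0) = (a = b)" by (cases a; cases b) simp_all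
lemma bit_cases01: "(x::bit) = 0 \<or> x = 1" by (cases x) simp_all

definition per :: "nat \<Rightarrow> (int \<Rightarrow> 'a) \<Rightarrow> bool" where
  "per n f \<longleftrightarrow> (\<forall>t. f (t + int n) = f t)"

lemma per_mult: assumes "per n f" shows "f (t + k * int n) = f t"
proof (induction k rule: int_induct[where k=0])
  case base then show ?case by simp
next
  case (step1 i)
  have "f (t + (i+1) * int n) = f ((t + i * int n) + int n)" by (simp add: algebra_simps)
  also have "\<dots> = f (t + i * int n)" using assms unfolding per_def by blast
  finally show ?case using step1 by simp
next
  case (step2 i)
  have "f (t + i * int n) = f ((t + (i - 1) * int n) + int n)" by (simp add: algebra_simps)
  also have "\<dots> = f (t + (i-1) * int n)" using assms unfolding per_def by blast
  finally show ?case using step2 by simp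
qed

lemma per_mod: assumes "per n f" shows "f (t mod int n) = f t"
proof -
  have "f (t mod int n + (t div int n) * int n) = f (t mod int n)" by (rule per_mult[OF assms])
  then show ?thesis by (metis div_mult_mod_eq add.commute)
qed

lemma per_cong: assumes "per n f" "a mod int n = b mod int n" shows "f a = f b"
  using per_mod[OF assms(1), of a] per_mod[OF assms(1), of b] assms(2) by simp

lemma per_comp: "per n f \<Longrightarrow> per n (\<lambda>t. h (f t))"
  unfolding per_def by simp

lemma per_shift: "per n f \<Longrightarrow> per n (\<lambda>t. f (t + c))"
  unfolding per_def by (metis add.assoc add.commute)

lemma per_sum_shift1:
  fixes g :: "int \<Rightarrow> 'a::comm_monoid_add"
  assumes "per n g" shows "(\<Sum>s<n. g (int s + 1)) = (\<Sum>s<n. g (int s))"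
proof (cases n)
  case 0 then show ?thesis by simp
next
  case (Suc m)
  have e: "g (int m + 1) = g 0"
    using assms Suc unfolding per_def by (metis add.left_neutral of_nat_Suc add.commute)
  have "(\<Sum>s<Suc m. g (int s + 1)) = (\<Sum>s<m. g (int s + 1)) + g (int m + 1)"
    by (rule sum.lessThan_Suc)
  also have "\<dots> = g 0 + (\<Sum>s<m. g (int (Suc s)))"
    by (subst e) (simp add: add.commute)
  also have "\<dots> = (\<Sum>s<Suc m. g (int s))"
    by (subst sum.lessThan_Suc_shift) simp
  finally show ?thesis using Suc by simp
qed

lemma per_sum_shift:
  fixes g :: "int \<Rightarrow> 'a::comm_monoid_add"
  assumes "per n g" shows "(\<Sum>s<n. g (int s + c)) = (\<Sum>s<n. g (int s))"
proof (induction c rule: int_induct[where k=0])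
  case base then show ?case by simp
next
  case (step1 i)
  have "(\<Sum>s<n. g (int s + (i + 1))) = (\<Sum>s<n. (\<lambda>t. g (t + i)) (int s + 1))"
    by (simp add: ac_simps)
  also have "\<dots> = (\<Sum>s<n. (\<lambda>t. g (t + i)) (int s))"
    by (rule per_sum_shift1[OF per_shift[OF assms]])
  finally show ?case using step1 by simp
next
  case (step2 i)
  have "(\<Sum>s<n. g (int s + i)) = (\<Sum>s<n. (\<lambda>t. g (t + (i - 1))) (int s + 1))"
    by (simp add: algebra_simps)
  also have "\<dots> = (\<Sum>s<n. (\<lambda>t. g (t + (i - 1))) (int s))"
    by (rule per_sum_shift1[OF per_shift[OF assms]])
  finally show ?case using step2 by simp
qed

lemma sum_lessThan_add:
  fixes f :: "nat \<Rightarrow> 'a::comm_monoid_add"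
  shows "(\<Sum>k<a+b. f k) = (\<Sum>k<a. f k) + (\<Sum>k<b. f (a + k))"
  by (induction b) (simp_all add: add.assoc)

definition ind :: "bit \<Rightarrow> nat" where "ind x = (if x = 0 then 0 else 1)"

definition cnt :: "nat \<Rightarrow> (int \<Rightarrow> bit) \<Rightarrow> nat" where
  "cnt n f = (\<Sum>s<n. ind (f (int s)))"

lemma cnt_shift: "per n f \<Longrightarrow> (\<Sum>s<n. ind (f (int s + c))) = cnt n f"
  unfolding cnt_def by (rule per_sum_shift[OF per_comp])

lemma count_final:
  fixes A B V :: "int \<Rightarrow> bit"
  assumes pA: "per n A" and pB: "per n B" and pV: "per n V"
  and H: "\<And>s. (\<Sum>q<L. V (s + int q * D)) = 1 + (\<Sum>k<l. A (s + e + int k)) + B (s + e + int l - 1) + B (s + e - 1)"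
  shows "n \<le> L * cnt n V + l * cnt n A + 2 * cnt n B"
proof -
  have one: "1 \<le> (\<Sum>q<L. ind (V (s + int q * D))) + (\<Sum>k<l. ind (A (s + e + int k)))
      + ind (B (s + e + int l - 1)) + ind (B (s + e - 1))" for s
  proof (rule ccontr)
    assume "\<not> ?thesis"
    then have "(\<Sum>q<L. ind (V (s + int q * D))) + (\<Sum>k<l. ind (A (s + e + int k)))
      + ind (B (s + e + int l - 1)) + ind (B (s + e - 1)) = 0" by linarith
    then have z1: "\<forall>q\<in>{..<L}. ind (V (s + int q * D)) = 0"
      and z2: "\<forall>k\<in>{..<l}. ind (A (s + e + int k)) = 0"
      and z3: "ind (B (s + e + int l - 1)) = 0" and z4: "ind (B (s + e - 1)) = 0"
      by (simp_all add: sum_eq_0_iff)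
    have "(\<Sum>q<L. V (s + int q * D)) = 0"
      using z1 by (intro sum.neutral) (auto simp: ind_def split: if_splits)
    moreover have "(\<Sum>k<l. A (s + e + int k)) = 0"
      using z2 by (intro sum.neutral) (auto simp: ind_def split: if_splits)
    moreover have "B (s + e + int l - 1) = 0" "B (s + e - 1) = 0"
      using z3 z4 by (auto simp: ind_def split: if_splits)
    ultimately show False using H[of s] by simp
  qed
  have "n = (\<Sum>s<n. (1::nat))" by simp
  also have "\<dots> \<le> (\<Sum>s<n. (\<Sum>q<L. ind (V (int s + int q * D))) + (\<Sum>k<l. ind (A (int s + e + int k)))
      + ind (B (int s + e + int l - 1)) + ind (B (int s + e - 1)))"
    by (intro sum_mono one)
  also have "\<dots> = (\<Sum>q<L. (\<Sum>s<n. ind (V (int s + int q * D)))) + (\<Sum>k<l. (\<Sum>s<n. ind (A (int s + (e + int k)))))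
      + (\<Sum>s<n. ind (B (int s + (e + int l - 1)))) + (\<Sum>s<n. ind (B (int s + (e - 1))))"
    by (simp add: sum.distrib sum.swap[of _ "{..<n}"] add.assoc add_diff_eq)
  also have "\<dots> = L * cnt n V + l * cnt n A + 2 * cnt n B"
    by (simp add: cnt_shift[OF pA] cnt_shift[OF pB] cnt_shift[OF pV])
  finally show ?thesis .
qed




lemma core:
  fixes A B V U :: "int \<Rightarrow> bit" and M n d :: nat
  assumes dM: "d = 2*M+1" and nM: "n = 2*M*M+2*M+1"
  and M1: "M \<ge> 1" and pA: "per n A" and pB: "per n B" and pV: "per n V"
  and hU: "\<And>t. U t = A t + B t + B (t - 1)"
  and H1: "\<And>t. U t + U (t - int d) + V t + V (t - 1) = 0"
  and H2: "\<not> (\<exists>c. per n c \<and> (\<forall>t. U t = c t + c (t - 1) \<and> V t = c t + c (t - int d)))"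
  shows "d \<le> cnt n A + cnt n B + cnt n V"
proof -
  have n0: "n > 0" using nM by simp
  have pU: "per n U" unfolding per_def
  proof
    fix t
    have "B (t + int n - 1) = B (t - 1)" using pB unfolding per_def by (metis add_diff_eq diff_add_eq)
    then show "U (t + int n) = U t" using pA pB unfolding per_def by (simp add: hU)
  qed
  define g where "g t = (\<Sum>i<d. U (t - int i))" for t
  have dS: "d = Suc (2*M)" using dM by simp
  have gstep: "g t + g (t - 1) = U t + U (t - int d)" for t
  proof -
    have a: "g t = U t + (\<Sum>i<2*M. U (t - 1 - int i))"
      unfolding g_def dS by (subst sum.lessThan_Suc_shift) (simp add: algebra_simps)
    have b: "g (t - 1) = (\<Sum>i<2*M. U (t - 1 - int i)) + U (t - int d)"
      unfolding g_def dS by (simp add: algebra_simps)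
    show ?thesis unfolding a b by (simp add: algebra_simps)
  qed
  define W where "W t = V t + g t" for t
  have Wstep: "W t = W (t - 1)" for t
  proof -
    have "W t + W (t - 1) = (U t + U (t - int d) + V t + V (t - 1))"
      unfolding W_def using gstep[of t] by (simp add: algebra_simps)
    then show ?thesis using H1[of t] by (simp add: bit_add_eq0)
  qed
  have Wc: "W t = W 0" for t
  proof (induction t rule: int_induct[where k=0])
    case base then show ?case by simp
  next
    case (step1 i) then show ?case using Wstep[of "i+1"] by simp
  next
    case (step2 i) then show ?case using Wstep[of i] by simp
  qed
  define \<epsilon> where "\<epsilon> = W 0"
  have Vg: "V t = g t + \<epsilon>" for t
    using Wc[of t] unfolding W_def \<epsilon>_def by (metis add.assoc bit_add_self add_0_right)
  define P where "P = (\<Sum>k<n. U (int k))"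
  have PU: "(\<Sum>k<n. U (x + int k)) = P" for x
    unfolding P_def using per_sum_shift[OF pU, of x] by (simp add: add.commute)
  have Pe: "P \<noteq> 0 \<or> \<epsilon> \<noteq> 0"
  proof (rule ccontr)
    assume "\<not> (P \<noteq> 0 \<or> \<epsilon> \<noteq> 0)"
    then have P0: "P = 0" and e0: "\<epsilon> = 0" by auto
    define c where "c t = (\<Sum>k<Suc (nat (t mod int n)). U (int k))" for t
    have pc: "per n c" unfolding per_def c_def by simp
    have cstep: "c t + c (t - 1) = U t" for t
    proof (cases "t mod int n = 0")
      case True
      have "(t - 1) mod int n = (t mod int n - 1) mod int n" by (simp add: mod_diff_left_eq)
      also have "\<dots> = int n - 1" using True n0 by (simp add: zmod_minus1)
      finally have m1: "(t - 1) mod int n = int n - 1" .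
      have "c (t - 1) = P" unfolding c_def P_def m1 using n0
        by (simp add: nat_diff_distrib)
      moreover have "c t = U t" unfolding c_def using True per_mod[OF pU, of t] by simp
      ultimately show ?thesis using P0 by simp
    next
      case False
      have "0 \<le> t mod int n" using n0 by simp
      then have r0: "0 < t mod int n" using False by linarith
      have rn: "t mod int n < int n" using n0 by simp
      have "(t - 1) mod int n = (t mod int n - 1) mod int n" by (simp add: mod_diff_left_eq)
      also have "\<dots> = t mod int n - 1" using r0 rn by simp
      finally have m1: "(t - 1) mod int n = t mod int n - 1" .
      define r where "r = nat (t mod int n) - 1"
      have r: "t mod int n = int (Suc r)" using r0 unfolding r_def by simp
      have e1: "nat (1 + int r) = Suc r" by simp
      have "c t = c (t - 1) + U (int (Suc r))"
        unfolding c_def m1 r by (simp add: e1)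
      moreover have "U (int (Suc r)) = U t" using per_mod[OF pU, of t] r by simp
      ultimately show ?thesis by (simp add: add.commute)
    qed
    have ctel: "c t + c (t - int j) = (\<Sum>i<j. U (t - int i))" for t j
    proof (induction j)
      case 0 then show ?case by simp
    next
      case (Suc j)
      have "c (t - int j) + c (t - int j - 1) = U (t - int j)" by (rule cstep)
      have bc: "\<And>x y z::bit. x + y + (y + z) = x + z" by (simp add: algebra_simps)
      have "t - int (Suc j) = t - int j - 1" by simp
      then have "c t + c (t - int (Suc j)) = (c t + c (t - int j)) + (c (t - int j) + c (t - int j - 1))"
        using bc by (simp add: diff_diff_eq add.commute)
      then have "c t + c (t - int (Suc j)) = (c t + c (t - int j)) + U (t - int j)"
        using \<open>c (t - int j) + c (t - int j - 1) = U (t - int j)\<close> by simp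
      then show ?case using Suc by simp
    qed
    have "\<forall>t. U t = c t + c (t - 1) \<and> V t = c t + c (t - int d)"
      using cstep ctel Vg e0 unfolding g_def by simp
    with pc H2 show False by blast
  qed
  have blk: "(\<Sum>q<L. V (s + int q * int d)) = of_nat L * \<epsilon> + (\<Sum>k<L*d. U (s - int d + 1 + int k))" for L s
  proof (induction L)
    case 0 then show ?case by simp
  next
    case (Suc L)
    have gs: "g (s + int L * int d) = (\<Sum>k<d. U (s - int d + 1 + int (L*d + k)))"
    proof -
      have "(\<Sum>k<d. U (s - int d + 1 + int (L*d + k))) = (\<Sum>i<d. U (s - int d + 1 + int (L*d + (d - Suc i))))"
        by (rule sum.nat_diff_reindex[symmetric])
      also have "\<dots> = (\<Sum>i<d. U (s + int L * int d - int i))"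
        by (intro sum.cong refl) (simp add: of_nat_diff algebra_simps)
      finally show ?thesis unfolding g_def by simp
    qed
    have "(\<Sum>q<Suc L. V (s + int q * int d)) = (\<Sum>q<L. V (s + int q * int d)) + V (s + int L * int d)"
      by simp
    also have "\<dots> = of_nat L * \<epsilon> + (\<Sum>k<L*d. U (s - int d + 1 + int k)) + (g (s + int L * int d) + \<epsilon>)"
      using Suc Vg by simp
    also have "\<dots> = of_nat (Suc L) * \<epsilon> + ((\<Sum>k<L*d. U (s - int d + 1 + int k)) + (\<Sum>k<d. U (s - int d + 1 + int (L*d + k))))"
      unfolding gs by (simp add: algebra_simps)
    also have "\<dots> = of_nat (Suc L) * \<epsilon> + (\<Sum>k<Suc L*d. U (s - int d + 1 + int k))"
      using sum_lessThan_add[of "\<lambda>k. U (s - int d + 1 + int k)" "L*d" d] by (simp add: add.commute)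
    finally show ?case .
  qed
  have tel: "(\<Sum>k<l. U (y + int k)) = (\<Sum>k<l. A (y + int k)) + B (y + int l - 1) + B (y - 1)" for y l
  proof (induction l)
    case 0 then show ?case by simp
  next
    case (Suc l)
    show ?case using Suc by (simp add: hU algebra_simps)
  qed
  have bit_solve: "\<And>x y z::bit. x + y = z \<Longrightarrow> x = z + y" by (simp add: algebra_simps)
  have caseA: "n \<le> M * cnt n V + (M+1) * cnt n A + 2 * cnt n B" if h: "of_nat M * \<epsilon> + P = 1"
  proof (rule count_final[OF pA pB pV, where D="int d" and e="- int d + 1 + int (M*d)"])
    fix s
    define y where "y = s + (- int d + 1 + int (M*d))"
    have sp: "(\<Sum>k<n. U (s - int d + 1 + int k)) = (\<Sum>k<M*d. U (s - int d + 1 + int k)) + (\<Sum>k<M+1. U (s - int d + 1 + int (M*d + k)))"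
    proof -
      have "n = M*d + (M+1)" using dM nM by (simp add: algebra_simps)
      then show ?thesis using sum_lessThan_add[of "\<lambda>k. U (s - int d + 1 + int k)" "M*d" "M+1"] by simp
    qed
    have X: "(\<Sum>k<M*d. U (s - int d + 1 + int k)) = P + (\<Sum>k<M+1. U (s - int d + 1 + int (M*d + k)))"
      by (rule bit_solve) (unfold sp[symmetric], rule PU)
    have Y: "(\<Sum>k<M+1. U (s - int d + 1 + int (M*d + k))) = (\<Sum>k<M+1. U (y + int k))"
      unfolding y_def by (intro sum.cong refl) (simp add: algebra_simps)
    have "(\<Sum>q<M. V (s + int q * int d)) = of_nat M * \<epsilon> + (\<Sum>k<M*d. U (s - int d + 1 + int k))"
      by (rule blk)
    also have "\<dots> = (of_nat M * \<epsilon> + P) + (\<Sum>k<M+1. U (y + int k))"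
      unfolding X Y by (simp add: add.assoc)
    also have "\<dots> = 1 + ((\<Sum>k<M+1. A (y + int k)) + B (y + int (M+1) - 1) + B (y - 1))"
      unfolding h tel ..
    finally show "(\<Sum>q<M. V (s + int q * int d)) = 1 + (\<Sum>k<M+1. A (s + (- int d + 1 + int (M*d)) + int k)) + B (s + (- int d + 1 + int (M*d)) + int (M+1) - 1) + B (s + (- int d + 1 + int (M*d)) - 1)"
      unfolding y_def by (simp add: add.assoc)
  qed
  have caseB: "n \<le> (M+1) * cnt n V + M * cnt n A + 2 * cnt n B" if h: "of_nat (M+1) * \<epsilon> + P = 1"
  proof (rule count_final[OF pA pB pV, where D="int d" and e="- int d + 1"])
    fix s
    define y where "y = s + (- int d + 1)"
    have sp: "(\<Sum>k<(M+1)*d. U (y + int k)) = P + (\<Sum>k<M. U (y + int k))"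
    proof -
      have e: "(M+1)*d = n + M" using dM nM by (simp add: algebra_simps)
      have "(\<Sum>k<n+M. U (y + int k)) = (\<Sum>k<n. U (y + int k)) + (\<Sum>k<M. U (y + int (n + k)))"
        by (rule sum_lessThan_add)
      also have "(\<Sum>k<M. U (y + int (n + k))) = (\<Sum>k<M. U (y + int k))"
      proof (intro sum.cong refl)
        fix k show "U (y + int (n + k)) = U (y + int k)"
          using pU unfolding per_def by (metis add.assoc add.commute of_nat_add)
      qed
      finally show ?thesis unfolding e PU .
    qed
    have Y: "(\<Sum>k<(M+1)*d. U (s - int d + 1 + int k)) = (\<Sum>k<(M+1)*d. U (y + int k))"
      unfolding y_def by (intro sum.cong refl) (simp add: algebra_simps)
    have "(\<Sum>q<M+1. V (s + int q * int d)) = of_nat (M+1) * \<epsilon> + (\<Sum>k<(M+1)*d. U (s - int d + 1 + int k))"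
      by (rule blk)
    also have "\<dots> = (of_nat (M+1) * \<epsilon> + P) + (\<Sum>k<M. U (y + int k))"
      unfolding Y sp by (simp add: add.assoc)
    also have "\<dots> = 1 + ((\<Sum>k<M. A (y + int k)) + B (y + int M - 1) + B (y - 1))"
      unfolding h tel ..
    finally show "(\<Sum>q<M+1. V (s + int q * int d)) = 1 + (\<Sum>k<M. A (s + (- int d + 1) + int k)) + B (s + (- int d + 1) + int M - 1) + B (s + (- int d + 1) - 1)"
      unfolding y_def by (simp add: add.assoc)
  qed
  have choice: "of_nat M * \<epsilon> + P = 1 \<or> of_nat (M+1) * \<epsilon> + P = 1"
  proof (cases "\<epsilon> = 0")
    case True then show ?thesis using Pe by simp
  next
    case False
    then have e1: "\<epsilon> = 1" by simp
    show ?thesis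
    proof (cases "of_nat M + P = (1::bit)")
      case True then show ?thesis using e1 by simp
    next
      case False
      then have "of_nat M + P = (0::bit)" by simp
      then have "of_nat M + P + 1 = (1::bit)" by simp
      then show ?thesis using e1 by (simp add: algebra_simps)
    qed
  qed
  define a where "a = cnt n A"
  define b where "b = cnt n B"
  define m where "m = cnt n V"
  have key: "n \<le> (M+1) * (m + a) + 2 * b"
  proof -
    from choice show ?thesis
    proof
      assume "of_nat M * \<epsilon> + P = 1"
      then have "n \<le> M * m + (M+1) * a + 2 * b" using caseA unfolding a_def b_def m_def by blast
      moreover have "M * m \<le> (M+1) * m" by simp
      ultimately show ?thesis by (simp add: algebra_simps)
    next
      assume "of_nat (M+1) * \<epsilon> + P = 1"
      then have "n \<le> (M+1) * m + M * a + 2 * b" using caseB unfolding a_def b_def m_def by blast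
      moreover have "M * a \<le> (M+1) * a" by simp
      ultimately show ?thesis by (simp add: algebra_simps)
    qed
  qed
  show ?thesis
  proof (rule ccontr)
    assume "\<not> ?thesis"
    then have lt: "a + b + m \<le> 2*M" using dM unfolding a_def b_def m_def by simp
    have b2: "2 * b \<le> (M+1) * b" using M1 by simp
    have "(M+1)*(m+a+b) = (M+1)*(m+a) + (M+1)*b" by (simp add: algebra_simps)
    then have "n \<le> (M+1) * (m + a + b)" using key b2 by linarith
    also have "\<dots> \<le> (M+1) * (2*M)" using lt by (intro mult_le_mono2) simp
    finally show False using nM by (simp add: algebra_simps)
  qed
qed




lemma bpoly_minus: "(p::bit poly) - q = p + q"
  by (rule poly_eqI) simp

lemma bpoly_add_self[simp]: "(p::bit poly) + p = 0"
  by (rule poly_eqI) (simp only: coeff_add coeff_0 bit_add_self)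

lemma cyc_eq: "cyc_mod n = monom 1 n + 1"
  unfolding cyc_mod_def by (simp add: bpoly_minus)

lemma cyc_deg: "n > 0 \<Longrightarrow> degree (cyc_mod n) = n"
  unfolding cyc_eq by (subst degree_add_eq_left) (simp_all add: degree_monom_eq)

lemma cyc_nz: "n > 0 \<Longrightarrow> cyc_mod n \<noteq> 0"
  using cyc_deg[of n] by (metis degree_0 less_numeral_extra(3))

lemma Rn_coeff: assumes "n > 0" "p \<in> Rn n" "n \<le> i" shows "coeff p i = 0"
proof -
  have pm: "p mod cyc_mod n = p" using assms(2) unfolding Rn_def by simp
  show ?thesis
  proof (cases "p = 0")
    case True then show ?thesis by simp
  next
    case False
    then have "degree (p mod cyc_mod n) < n"
      using degree_mod_less[OF cyc_nz[OF assms(1)], of p] pm cyc_deg[OF assms(1)] by auto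
    then have "degree p < i" using pm assms(3) by simp
    then show ?thesis by (rule coeff_eq_0)
  qed
qed

lemma Rn_I: assumes "n > 0" "\<And>i. n \<le> i \<Longrightarrow> coeff p i = 0" shows "p \<in> Rn n"
proof -
  have "degree p \<le> n - 1" using assms by (intro degree_le) auto
  then have "degree p < degree (cyc_mod n)" using assms(1) cyc_deg[OF assms(1)] by linarith
  then show ?thesis unfolding Rn_def by (simp add: mod_poly_less)
qed

lemma Rn_mod: "p mod cyc_mod n \<in> Rn n"
  unfolding Rn_def by simp

lemma rmul_Rn: "rmul n p q \<in> Rn n" unfolding rmul_def by (rule Rn_mod)
lemma radd_Rn: "radd n p q \<in> Rn n" unfolding radd_def by (rule Rn_mod)

lemma radd_eq: "p \<in> Rn n \<Longrightarrow> q \<in> Rn n \<Longrightarrow> radd n p q = p + q"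
  unfolding radd_def Rn_def by (simp add: poly_mod_add_left)

definition F :: "nat \<Rightarrow> bit poly \<Rightarrow> int \<Rightarrow> bit" where
  "F n p t = coeff p (nat (t mod int n))"

lemma per_F: "per n (F n p)" unfolding per_def F_def by simp

lemma F_add: "F n (p + q) t = F n p t + F n q t" unfolding F_def by simp

lemma F_zero[simp]: "F n 0 t = 0" unfolding F_def by simp

lemma F_int: "i < n \<Longrightarrow> F n p (int i) = coeff p i" unfolding F_def by simp

lemma F_eqI: assumes "n > 0" "p \<in> Rn n" "q \<in> Rn n" "\<And>t. F n p t = F n q t" shows "p = q"
proof (rule poly_eqI)
  fix i show "coeff p i = coeff q i"
  proof (cases "i < n")
    case True then show ?thesis using assms(4)[of "int i"] by (simp add: F_int)
  next
    case False then show ?thesis using Rn_coeff[OF assms(1) assms(2)] Rn_coeff[OF assms(1) assms(3)] by simp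
  qed
qed

lemma Rn_sum_monoms: assumes "n > 0" "p \<in> Rn n" shows "(\<Sum>i<n. monom (coeff p i) i) = p"
proof -
  have "degree p \<le> n - 1"
    using assms by (intro degree_le) (auto intro: Rn_coeff)
  then have "(\<Sum>i\<le>n-1. monom (coeff p i) i) = p" by (rule poly_as_sum_of_monoms')
  moreover have "{..n-1} = {..<n}" using assms(1) by auto
  ultimately show ?thesis by simp
qed




lemma rot:
  assumes n0: "n > 0" and pR: "p \<in> Rn n" and kn: "k < n"
  shows "F n ((p * monom 1 k) mod cyc_mod n) t = F n p (t - int k)"
proof -
  define R where "R = (\<Sum>i<n. monom (coeff p i) ((i + k) mod n))"
  have e1: "p * monom 1 k = (\<Sum>i<n. monom (coeff p i) (i + k))"
  proof -
    have "p * monom 1 k = (\<Sum>i<n. monom (coeff p i) i) * monom 1 k"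
      using Rn_sum_monoms[OF n0 pR] by simp
    also have "\<dots> = (\<Sum>i<n. monom (coeff p i) i * monom 1 k)" by (simp add: sum_distrib_right)
    finally show ?thesis by (simp add: mult_monom)
  qed
  have dv: "cyc_mod n dvd (p * monom 1 k - R)"
  proof -
    have "p * monom 1 k - R = (\<Sum>i<n. monom (coeff p i) (i + k) - monom (coeff p i) ((i + k) mod n))"
      unfolding e1 R_def by (simp add: sum_subtractf)
    also have "cyc_mod n dvd \<dots>"
    proof (intro dvd_sum)
      fix i assume "i \<in> {..<n}"
      then have i: "i < n" by simp
      show "cyc_mod n dvd monom (coeff p i) (i + k) - monom (coeff p i) ((i + k) mod n)"
      proof (cases "i + k < n")
        case True then show ?thesis by simp
      next
        case False
        then have ik: "i + k = n + (i + k - n)" and im: "(i + k) mod n = i + k - n"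
          using i kn by (simp_all add: le_mod_geq)
        have "monom (coeff p i) (i + k) - monom (coeff p i) ((i + k) mod n)
            = monom (coeff p i) (i + k - n) * cyc_mod n"
          unfolding cyc_eq im by (subst ik) (simp add: bpoly_minus mult_monom algebra_simps)
        then show ?thesis by simp
      qed
    qed
    finally show ?thesis .
  qed
  have RR: "R \<in> Rn n"
  proof (rule Rn_I[OF n0])
    fix i assume "n \<le> i"
    then show "coeff R i = 0" unfolding R_def coeff_sum
      by (intro sum.neutral) (auto simp: coeff_monom dest: order.strict_trans2[OF mod_less_divisor[OF n0]])
  qed
  have "(p * monom 1 k) mod cyc_mod n = R mod cyc_mod n"
    using dv by (simp add: mod_eq_dvd_iff)
  also have "\<dots> = R" using RR unfolding Rn_def by simp
  finally have eq: "(p * monom 1 k) mod cyc_mod n = R" .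
  define i0 where "i0 = nat ((t - int k) mod int n)"
  have i0n: "i0 < n" unfolding i0_def using n0 by (simp add: nat_less_iff)
  have iff: "((i + k) mod n = nat (t mod int n)) \<longleftrightarrow> i = i0" if i: "i < n" for i
  proof -
    have "((i + k) mod n = nat (t mod int n)) \<longleftrightarrow> int ((i + k) mod n) = t mod int n"
      using n0 by auto
    also have "\<dots> \<longleftrightarrow> (int i + int k) mod int n = t mod int n" by (simp add: zmod_int)
    also have "\<dots> \<longleftrightarrow> int i mod int n = (t - int k) mod int n"
      by (simp add: mod_eq_dvd_iff algebra_simps)
    also have "\<dots> \<longleftrightarrow> int i = (t - int k) mod int n" using i by simp
    also have "\<dots> \<longleftrightarrow> i = i0" unfolding i0_def using n0 by auto
    finally show ?thesis .
  qed
  have "F n R t = (\<Sum>i<n. if (i + k) mod n = nat (t mod int n) then coeff p i else 0)"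
    unfolding F_def R_def coeff_sum by (simp add: coeff_monom)
  also have "\<dots> = (\<Sum>i<n. if i = i0 then coeff p i else 0)"
    by (intro sum.cong refl) (simp add: iff)
  also have "\<dots> = coeff p i0" using i0n by simp
  also have "\<dots> = F n p (t - int k)" unfolding F_def i0_def ..
  finally show ?thesis unfolding eq .
qed




lemma F_rmul:
  assumes n0: "n > 0" and pR: "p \<in> Rn n" and kn: "k < n"
  shows "F n (rmul n p (1 + monom 1 k)) t = F n p t + F n p (t - int k)"
proof -
  have "rmul n p (1 + monom 1 k) = p mod cyc_mod n + (p * monom 1 k) mod cyc_mod n"
    unfolding rmul_def by (simp add: distrib_left poly_mod_add_left)
  also have "\<dots> = p + (p * monom 1 k) mod cyc_mod n" using pR unfolding Rn_def by simp
  finally show ?thesis by (simp add: F_add rot[OF assms])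
qed

definition mk :: "nat \<Rightarrow> (int \<Rightarrow> bit) \<Rightarrow> bit poly" where
  "mk n c = (\<Sum>i<n. monom (c (int i)) i)"

lemma coeff_mk: "coeff (mk n c) j = (if j < n then c (int j) else 0)"
  unfolding mk_def coeff_sum by (simp add: coeff_monom)

lemma mk_Rn: "n > 0 \<Longrightarrow> mk n c \<in> Rn n"
  by (rule Rn_I) (simp_all add: coeff_mk)

lemma F_mk: "n > 0 \<Longrightarrow> per n c \<Longrightarrow> F n (mk n c) t = c t"
  unfolding F_def coeff_mk using per_mod[of n c t] by (simp add: nat_less_iff)

lemma cnt_F: assumes n0: "n > 0" and pR: "p \<in> Rn n" shows "cnt n (F n p) = wt p"
proof -
  have lt: "coeff p i \<noteq> 0 \<Longrightarrow> i < n" for i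
    using Rn_coeff[OF n0 pR, of i] by (cases "i < n") auto
  have S: "{i. coeff p i \<noteq> 0} = {i \<in> {..<n}. coeff p i \<noteq> 0}"
    using lt by auto
  have "cnt n (F n p) = (\<Sum>s<n. ind (coeff p s))" unfolding cnt_def by (simp add: F_int)
  also have "\<dots> = (\<Sum>s\<in>{..<n}. if coeff p s \<noteq> 0 then 1 else 0)"
    by (intro sum.cong refl) (simp add: ind_def)
  also have "\<dots> = card {i \<in> {..<n}. coeff p i \<noteq> 0}"
    by (simp add: sum.inter_filter[symmetric])
  finally show ?thesis unfolding wt_def S .
qed

lemma cnt_affine:
  assumes n0: "n > 0" and cop: "coprime a (int n)" and pf: "per n f"
  shows "cnt n (\<lambda>s. f (a * s + b)) = cnt n f"
proof -
  define h where "h s = nat ((a * int s + b) mod int n)" for s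
  have hn: "h ` {..<n} \<subseteq> {..<n}" unfolding h_def using n0 by (auto simp: nat_less_iff)
  have inj: "inj_on h {..<n}"
  proof (rule inj_onI)
    fix x y assume x: "x \<in> {..<n}" and y: "y \<in> {..<n}" and hxy: "h x = h y"
    have "(a * int x + b) mod int n = (a * int y + b) mod int n"
      using hxy n0 unfolding h_def by (simp add: nat_eq_iff2)
    then have "int n dvd a * (int x - int y)" by (simp add: mod_eq_dvd_iff algebra_simps)
    then have "int n dvd (int x - int y)"
      using cop by (simp add: coprime_dvd_mult_right_iff coprime_commute)
    then have "int x mod int n = int y mod int n" by (simp add: mod_eq_dvd_iff)
    then show "x = y" using x y by simp
  qed
  have bij: "bij_betw h {..<n} {..<n}"
    unfolding bij_betw_def using inj endo_inj_surj[OF _ hn inj] by simp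
  have "cnt n (\<lambda>s. f (a * s + b)) = (\<Sum>s<n. ind (f (int (h s))))"
    unfolding cnt_def h_def using n0 per_mod[OF pf] by simp
  also have "\<dots> = (\<Sum>s<n. ind (f (int s)))"
    by (rule sum.reindex_bij_betw[OF bij, of "\<lambda>s. ind (f (int s))"])
  finally show ?thesis unfolding cnt_def .
qed




lemma per_affine: "per n f \<Longrightarrow> per n (\<lambda>s. f (a * s + b))"
  unfolding per_def
proof
  fix t assume h: "\<forall>t. f (t + int n) = f t"
  have "f (a * (t + int n) + b) = f ((a * t + b) + a * int n)" by (simp add: algebra_simps)
  also have "\<dots> = f (a * t + b)" using per_mult[of n f "a * t + b" a] h unfolding per_def by simp
  finally show "f (a * (t + int n) + b) = f (a * t + b)" .
qed

lemma per_eq: "per n f \<Longrightarrow> x = y + k * int n \<Longrightarrow> f x = f y"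
  using per_mult by metis

lemma xpow_eq: "k < n \<Longrightarrow> xpow n k = monom 1 k"
  unfolding xpow_def by simp

lemma X_bound:
  fixes M n d :: nat
  assumes dM: "d = 2*M+1" and nM: "n = 2*M*M+2*M+1" and M1: "M \<ge> 1"
  and jR: "j \<in> Rn n" and uR: "u \<in> Rn n" and vR: "v \<in> Rn n"
  and C: "(radd n u (rmul n j (1 + xpow n 1)), v) \<in> C1 n d - C2 n d"
  shows "d \<le> wt j + wt u + wt v"
proof -
  have n0: "n > 0" using nM by simp
  have n1: "1 < n" using nM M1 by simp
  have dn: "d < n" using nM dM M1 by (simp add: algebra_simps)
  have x1: "xpow n 1 = monom 1 1" using n1 by (rule xpow_eq)
  have xd: "xpow n d = monom 1 d" using dn by (rule xpow_eq)
  define Uq where "Uq = radd n u (rmul n j (1 + monom 1 1))"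
  have UR: "Uq \<in> Rn n" unfolding Uq_def by (rule radd_Rn)
  have hU: "F n Uq t = F n u t + F n j t + F n j (t - 1)" for t
    unfolding Uq_def using radd_eq[OF uR rmul_Rn] F_add F_rmul[OF n0 jR n1]
    by (simp add: add.assoc)
  have C1m: "(Uq, v) \<in> C1 n d" and C2m: "(Uq, v) \<notin> C2 n d" using C unfolding Uq_def x1 by auto
  have H1: "F n Uq t + F n Uq (t - int d) + F n v t + F n v (t - 1) = 0" for t
  proof -
    have "radd n (rmul n Uq (1 + monom 1 d)) (rmul n v (1 + monom 1 1)) = 0"
      using C1m unfolding C1_def xd x1 by simp
    then have "F n (radd n (rmul n Uq (1 + monom 1 d)) (rmul n v (1 + monom 1 1))) t = 0" by simp
    then show ?thesis
      using radd_eq[OF rmul_Rn rmul_Rn] F_add F_rmul[OF n0 UR dn] F_rmul[OF n0 vR n1]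
      by (simp add: add.assoc)
  qed
  have H2: "\<not> (\<exists>c. per n c \<and> (\<forall>t. F n Uq t = c t + c (t - 1) \<and> F n v t = c t + c (t - int d)))"
  proof
    assume "\<exists>c. per n c \<and> (\<forall>t. F n Uq t = c t + c (t - 1) \<and> F n v t = c t + c (t - int d))"
    then obtain c where pc: "per n c" and hc: "\<And>t. F n Uq t = c t + c (t - 1)" "\<And>t. F n v t = c t + c (t - int d)"
      by blast
    define cp where "cp = mk n c"
    have cR: "cp \<in> Rn n" unfolding cp_def using n0 by (rule mk_Rn)
    have Fc: "F n cp t = c t" for t unfolding cp_def using F_mk[OF n0 pc] .
    have e1: "rmul n cp (1 + monom 1 1) = Uq"
    proof (rule F_eqI[OF n0 rmul_Rn UR])
      fix t
      have "F n (rmul n cp (1 + monom 1 1)) t = F n cp t + F n cp (t - int 1)" by (rule F_rmul[OF n0 cR n1])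
      then show "F n (rmul n cp (1 + monom 1 1)) t = F n Uq t" by (simp add: Fc hc)
    qed
    have e2: "rmul n cp (1 + monom 1 d) = v"
    proof (rule F_eqI[OF n0 rmul_Rn vR])
      fix t
      have "F n (rmul n cp (1 + monom 1 d)) t = F n cp t + F n cp (t - int d)" by (rule F_rmul[OF n0 cR dn])
      then show "F n (rmul n cp (1 + monom 1 d)) t = F n v t" by (simp add: Fc hc)
    qed
    have "(Uq, v) \<in> C2 n d" unfolding C2_def x1 xd using cR e1 e2 by blast
    with C2m show False by simp
  qed
  have "d \<le> cnt n (F n u) + cnt n (F n j) + cnt n (F n v)"
    by (rule core[OF dM nM M1 per_F per_F per_F hU H1 H2])
  then show ?thesis using cnt_F[OF n0 uR] cnt_F[OF n0 jR] cnt_F[OF n0 vR] by simp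
qed




lemma coprime_dn:
  assumes "2 * int n = int d * int d + 1"
  shows "coprime (- int d) (int n)"
proof (rule coprimeI)
  fix c :: int assume c1: "c dvd - int d" and c2: "c dvd int n"
  have "c dvd int d * int d" using c1 by simp
  moreover have "c dvd 2 * int n" using c2 by simp
  ultimately have "c dvd 2 * int n - int d * int d" by (rule dvd_diff[rotated])
  then show "is_unit c" using assms by simp
qed

lemma Z_bound:
  fixes M n d :: nat
  assumes dM: "d = 2*M+1" and nM: "n = 2*M*M+2*M+1" and M1: "M \<ge> 1"
  and jR: "j \<in> Rn n" and uR: "u \<in> Rn n" and vR: "v \<in> Rn n"
  and C: "(radd n u (rmul n j (1 + xpow n (n - d mod n))), v) \<in> C1' n d - C2' n d"
  shows "d \<le> wt j + wt u + wt v"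
proof -
  have n0: "n > 0" using nM by simp
  have n1: "1 < n" using nM M1 by simp
  have dn: "d < n" using nM dM M1 by (simp add: algebra_simps)
  have hn2: "2 * int n = int d * int d + 1" using nM dM by (simp add: algebra_simps)
  have ndn: "n - d < n" using dM dn by simp
  have n1n: "n - 1 < n" using n0 by simp
  have xd: "xpow n (n - d mod n) = monom 1 (n - d)" using dn ndn by (simp add: xpow_eq)
  have x1: "xpow n (n - 1 mod n) = monom 1 (n - 1)" using n1 n1n by (simp add: xpow_eq)
  have ind: "int (n - d) = int n - int d" using dn by simp
  have in1: "int (n - 1) = int n - 1" using n0 by simp
  have in1': "int (n - Suc 0) = int n - 1" using n0 by simp
  define Uq where "Uq = radd n u (rmul n j (1 + monom 1 (n - d)))"
  have UR: "Uq \<in> Rn n" unfolding Uq_def by (rule radd_Rn)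
  have shd: "F n p (t - int (n - d)) = F n p (t + int d)" for p t
    by (rule per_eq[OF per_F, where k="-1"]) (simp add: ind)
  have sh1: "F n p (t - int (n - 1)) = F n p (t + 1)" for p t
    by (rule per_eq[OF per_F, where k="-1"]) (simp add: in1 in1')
  have hU: "F n Uq t = F n u t + F n j t + F n j (t + int d)" for t
    unfolding Uq_def using radd_eq[OF uR rmul_Rn] F_add F_rmul[OF n0 jR ndn] shd
    by (simp add: add.assoc)
  have C1m: "(Uq, v) \<in> C1' n d" and C2m: "(Uq, v) \<notin> C2' n d" using C unfolding Uq_def xd by auto
  have H1: "F n Uq t + F n Uq (t + 1) + F n v t + F n v (t + int d) = 0" for t
  proof -
    have "radd n (rmul n Uq (1 + monom 1 (n - 1))) (rmul n v (1 + monom 1 (n - d))) = 0"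
      using C1m unfolding C1'_def xd x1 by simp
    then have "F n (radd n (rmul n Uq (1 + monom 1 (n - 1))) (rmul n v (1 + monom 1 (n - d)))) t = 0" by simp
    then show ?thesis
      using radd_eq[OF rmul_Rn rmul_Rn] F_add F_rmul[OF n0 UR n1n] F_rmul[OF n0 vR ndn] shd sh1
      by (simp add: add.assoc)
  qed
  define A where "A s = F n u (- int d * s + 1)" for s
  define B where "B s = F n j (- int d * s + 1)" for s
  define V where "V s = F n v (- int d * s + 0)" for s
  define U where "U s = F n Uq (- int d * s + 1)" for s
  have pA: "per n A" unfolding A_def by (rule per_affine[OF per_F])
  have pB: "per n B" unfolding B_def by (rule per_affine[OF per_F])
  have pV: "per n V" unfolding V_def by (rule per_affine[OF per_F])
  have hU2: "U s = A s + B s + B (s - 1)" for s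
  proof -
    have "B (s - 1) = F n j ((- int d * s + 1) + int d)" unfolding B_def by (simp add: algebra_simps)
    then show ?thesis unfolding U_def A_def B_def by (simp add: hU)
  qed
  have H1b: "U s + U (s - int d) + V s + V (s - 1) = 0" for s
  proof -
    have a: "U (s - int d) = F n Uq (- int d * s)"
      unfolding U_def by (rule per_eq[OF per_F, where k=2]) (use hn2 in algebra)
    have b: "V (s - 1) = F n v (- int d * s + int d)" unfolding V_def by (simp add: algebra_simps)
    have c: "U s = F n Uq (- int d * s + 1)" unfolding U_def ..
    have "F n Uq (- int d * s) + F n Uq (- int d * s + 1) + F n v (- int d * s) + F n v (- int d * s + int d) = 0"
      by (rule H1)
    then show ?thesis unfolding a b c V_def by (simp add: algebra_simps)
  qed
  have H2: "\<not> (\<exists>c. per n c \<and> (\<forall>t. U t = c t + c (t - 1) \<and> V t = c t + c (t - int d)))"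
  proof
    assume "\<exists>c. per n c \<and> (\<forall>t. U t = c t + c (t - 1) \<and> V t = c t + c (t - int d))"
    then obtain c2 where pc2: "per n c2" and hc: "\<And>t. U t = c2 t + c2 (t - 1)" "\<And>t. V t = c2 t + c2 (t - int d)"
      by blast
    define c where "c t = c2 (int d * t + - int d)" for t
    have pc: "per n c" unfolding c_def by (rule per_affine[OF pc2])
    have cU: "F n Uq t = c t + c (t + int d)" for t
    proof -
      have "F n Uq t = U (int d * t - int d)"
        unfolding U_def by (rule per_eq[OF per_F, where k="2 * (t - 1)"]) (use hn2 in algebra)
      also have "\<dots> = c2 (int d * t - int d) + c2 (int d * t - int d - 1)" by (rule hc)
      also have "c2 (int d * t - int d - 1) = c (t + int d)"
        unfolding c_def by (rule per_eq[OF pc2, where k="-2"]) (use hn2 in algebra)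
      finally show ?thesis unfolding c_def by simp
    qed
    have cV: "F n v t = c t + c (t + 1)" for t
    proof -
      have "F n v t = V (int d * t)"
        unfolding V_def by (rule per_eq[OF per_F, where k="2 * t"]) (use hn2 in algebra)
      also have "\<dots> = c2 (int d * t) + c2 (int d * t - int d)" by (rule hc)
      also have "\<dots> = c t + c (t + 1)" unfolding c_def by (simp add: algebra_simps)
      finally show ?thesis .
    qed
    define cp where "cp = mk n c"
    have cR: "cp \<in> Rn n" unfolding cp_def using n0 by (rule mk_Rn)
    have Fc: "F n cp t = c t" for t unfolding cp_def using F_mk[OF n0 pc] .
    have e1: "rmul n cp (1 + monom 1 (n - d)) = Uq"
    proof (rule F_eqI[OF n0 rmul_Rn UR])
      fix t
      have "F n (rmul n cp (1 + monom 1 (n - d))) t = F n cp t + F n cp (t - int (n - d))" by (rule F_rmul[OF n0 cR ndn])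
      then show "F n (rmul n cp (1 + monom 1 (n - d))) t = F n Uq t" using shd[of cp t] by (simp add: Fc cU)
    qed
    have e2: "rmul n cp (1 + monom 1 (n - 1)) = v"
    proof (rule F_eqI[OF n0 rmul_Rn vR])
      fix t
      have "F n (rmul n cp (1 + monom 1 (n - 1))) t = F n cp t + F n cp (t - int (n - 1))" by (rule F_rmul[OF n0 cR n1n])
      then show "F n (rmul n cp (1 + monom 1 (n - 1))) t = F n v t" using sh1[of cp t] by (simp add: Fc cV)
    qed
    have "(Uq, v) \<in> C2' n d" unfolding C2'_def x1 xd using cR e1 e2 by blast
    with C2m show False by simp
  qed
  have "d \<le> cnt n A + cnt n B + cnt n V"
    by (rule core[OF dM nM M1 pA pB pV hU2 H1b H2])
  moreover have "cnt n A = wt u" unfolding A_def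
    by (subst cnt_affine[OF n0 coprime_dn[OF hn2] per_F]) (rule cnt_F[OF n0 uR])
  moreover have "cnt n B = wt j" unfolding B_def
    by (subst cnt_affine[OF n0 coprime_dn[OF hn2] per_F]) (rule cnt_F[OF n0 jR])
  moreover have "cnt n V = wt v" unfolding V_def
    by (subst cnt_affine[OF n0 coprime_dn[OF hn2] per_F]) (rule cnt_F[OF n0 vR])
  ultimately show ?thesis by simp
qed




lemma bit_cancel3: "(x::bit) + y + (y + z) = x + z" by (cases x; cases y; cases z) simp_all

lemma bp_cancel: "(a::bit poly) + b + (b + c) = a + c"
  by (rule poly_eqI) (simp only: coeff_add bit_cancel3)

lemma coeff_injsum:
  fixes h :: "nat \<Rightarrow> nat"
  assumes "inj_on h {..<K}"
  shows "coeff (\<Sum>k<K. monom (1::bit) (h k)) j = (if j \<in> h ` {..<K} then 1 else 0)"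
proof -
  have "(\<Sum>k<K. monom (1::bit) (h k)) = (\<Sum>i\<in>h ` {..<K}. monom 1 i)"
    using sum.reindex[OF assms, of "\<lambda>i. monom (1::bit) i"] by simp
  moreover have "(\<Sum>x\<in>h ` {..<K}. (if x = j then (1::bit) else 0)) = (if j \<in> h ` {..<K} then 1 else 0)"
    by (rule sum.delta) (rule finite_imageI, rule finite_lessThan)
  ultimately show ?thesis by (simp add: coeff_sum coeff_monom)
qed

lemma wt_injsum:
  fixes h :: "nat \<Rightarrow> nat"
  assumes "inj_on h {..<K}"
  shows "wt (\<Sum>k<K. monom (1::bit) (h k)) = K"
proof -
  have "{j. coeff (\<Sum>k<K. monom (1::bit) (h k)) j \<noteq> 0} = h ` {..<K}"
    by (auto simp: coeff_injsum[OF assms])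
  then show ?thesis unfolding wt_def using card_image[OF assms] by simp
qed

lemma Rn_injsum:
  fixes h :: "nat \<Rightarrow> nat"
  assumes "inj_on h {..<K}" "n > 0" "\<And>k. k < K \<Longrightarrow> h k < n"
  shows "(\<Sum>k<K. monom (1::bit) (h k)) \<in> Rn n"
proof (rule Rn_I[OF assms(2)])
  fix i assume "n \<le> i"
  then show "coeff (\<Sum>k<K. monom (1::bit) (h k)) i = 0"
    using assms(3) by (auto simp: coeff_injsum[OF assms(1)] dest: order.strict_trans2)
qed

lemma poly_injsum: "poly (\<Sum>k<(K::nat). monom (1::bit) (h k)) 1 = of_nat K"
  by (simp add: poly_sum poly_monom)
lemma tel_u: "(\<Sum>m<K. monom (1::bit) (m*d)) * (1 + monom 1 d) = 1 + monom 1 (K*d)"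
proof (induction K)
  case 0
  have "monom (1::bit) 0 = 1" by (simp add: monom_0 one_pCons)
  then show ?case by simp
next
  case (Suc K)
  have e: "monom (1::bit) (K*d) * (1 + monom 1 d) = monom 1 (K*d) + monom 1 (Suc K * d)"
    by (simp add: distrib_left mult_monom add.commute)
  have "(\<Sum>m<Suc K. monom (1::bit) (m*d)) * (1 + monom 1 d)
      = (\<Sum>m<K. monom (1::bit) (m*d)) * (1 + monom 1 d) + monom (1::bit) (K*d) * (1 + monom 1 d)"
    by (simp add: distrib_right)
  also have "\<dots> = 1 + monom 1 (K*d) + (monom 1 (K*d) + monom 1 (Suc K * d))" unfolding Suc e ..
  also have "\<dots> = 1 + monom 1 (Suc K * d)" by (rule bp_cancel)
  finally show ?case .
qed

lemma tel_v: "(\<Sum>k<K. monom (1::bit) (a + k)) * (1 + monom 1 1) = monom 1 a + monom 1 (a + K)"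
proof (induction K)
  case 0 then show ?case by simp
next
  case (Suc K)
  have e: "monom (1::bit) (a + K) * (1 + monom 1 1) = monom 1 (a + K) + monom 1 (a + Suc K)"
    by (simp add: distrib_left mult_monom)
  have "(\<Sum>k<Suc K. monom (1::bit) (a + k)) * (1 + monom 1 1)
      = (\<Sum>k<K. monom (1::bit) (a + k)) * (1 + monom 1 1) + monom (1::bit) (a + K) * (1 + monom 1 1)"
    by (simp add: distrib_right)
  also have "\<dots> = monom 1 a + monom 1 (a + K) + (monom 1 (a + K) + monom 1 (a + Suc K))" unfolding Suc e ..
  also have "\<dots> = monom 1 a + monom 1 (a + Suc K)" by (rule bp_cancel)
  finally show ?case .
qed

lemma poly_mod_cyc: "poly (p mod cyc_mod n) 1 = poly p 1"
proof -
  have "poly (cyc_mod n) 1 = 0" unfolding cyc_eq by (simp add: poly_monom)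
  moreover have "p = (p div cyc_mod n) * cyc_mod n + p mod cyc_mod n" by simp
  ultimately show ?thesis by (metis add_0 mult_zero_right poly_add poly_mult)
qed

lemma poly_rmul_hook: "poly (rmul n c (1 + monom 1 k)) 1 = 0"
  unfolding rmul_def poly_mod_cyc by (simp add: poly_monom)

lemma witness:
  fixes M n d :: nat
  assumes dM: "d = 2*M+1" and nM: "n = 2*M*M+2*M+1" and M1: "M \<ge> 1"
  shows "bad_fault n d 0 (\<Sum>m<M. monom 1 (m*d)) (\<Sum>k<M+1. monom 1 (M*d + k))"
    and "wt 0 + wt (\<Sum>m<M. monom (1::bit) (m*d)) + wt (\<Sum>k<M+1. monom (1::bit) (M*d + k)) = d"
proof -
  define u where "u = (\<Sum>m<M. monom (1::bit) (m*d))"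
  define v where "v = (\<Sum>k<M+1. monom (1::bit) (M*d + k))"
  have n0: "n > 0" using nM by simp
  have n1: "1 < n" using nM M1 by simp
  have dn: "d < n" using nM dM M1 by (simp add: algebra_simps)
  have d0: "d > 0" using dM by simp
  have nMd: "M*d + (M+1) = n" using dM nM by (simp add: algebra_simps)
  have iu: "inj_on (\<lambda>m. m*d) {..<M}" using d0 by (auto simp: inj_on_def)
  have iv: "inj_on (\<lambda>k. M*d + k) {..<M+1}" by (auto simp: inj_on_def)
  have uR: "u \<in> Rn n" unfolding u_def
  proof (rule Rn_injsum[OF iu n0])
    fix k assume "k < M"
    then have "k * d \<le> M * d" by simp
    then show "k * d < n" using nMd by linarith
  qed
  have vR: "v \<in> Rn n" unfolding v_def
    by (rule Rn_injsum[OF iv n0]) (use nMd in linarith)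
  have zR: "0 \<in> Rn n" unfolding Rn_def by simp
  have wu: "wt u = M" unfolding u_def by (rule wt_injsum[OF iu])
  have wv: "wt v = M + 1" unfolding v_def by (rule wt_injsum[OF iv])
  have wz: "wt 0 = 0" unfolding wt_def by simp
  show "wt 0 + wt (\<Sum>m<M. monom (1::bit) (m*d)) + wt (\<Sum>k<M+1. monom (1::bit) (M*d + k)) = d"
    using wu wv wz dM unfolding u_def v_def by simp
  have x1: "xpow n 1 = monom 1 1" using n1 by (rule xpow_eq)
  have xd: "xpow n d = monom 1 d" using dn by (rule xpow_eq)
  have Ueq: "radd n u (rmul n 0 (1 + xpow n 1)) = u"
    unfolding rmul_def using radd_eq[OF uR zR] by simp
  have c1: "(u, v) \<in> C1 n d"
  proof -
    have "radd n (rmul n u (1 + monom 1 d)) (rmul n v (1 + monom 1 1))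
        = ((1 + monom 1 (M*d)) mod cyc_mod n + (monom 1 (M*d) + monom 1 n) mod cyc_mod n) mod cyc_mod n"
      unfolding radd_def rmul_def u_def v_def tel_u tel_v nMd ..
    also have "\<dots> = ((1 + monom 1 (M*d)) + (monom 1 (M*d) + monom 1 n)) mod cyc_mod n"
      by (simp only: poly_mod_add_left mod_mod_trivial)
    also have "\<dots> = cyc_mod n mod cyc_mod n"
      unfolding bp_cancel cyc_eq by (simp add: add.commute)
    also have "\<dots> = 0" by simp
    finally show ?thesis unfolding C1_def xd x1 using uR vR by simp
  qed
  have c2: "(u, v) \<notin> C2 n d"
  proof
    assume "(u, v) \<in> C2 n d"
    then obtain c where "u = rmul n c (1 + monom 1 1)" "v = rmul n c (1 + monom 1 d)"
      unfolding C2_def x1 xd by auto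
    then have "poly u 1 = 0" "poly v 1 = 0" by (simp_all add: poly_rmul_hook)
    moreover have "poly u 1 = of_nat M" "poly v 1 = of_nat (M+1)"
      unfolding u_def v_def by (rule poly_injsum)+
    ultimately show False by simp
  qed
  show "bad_fault n d 0 (\<Sum>m<M. monom 1 (m*d)) (\<Sum>k<M+1. monom 1 (M*d + k))"
    unfolding bad_fault_def u_def[symmetric] v_def[symmetric] Ueq using zR uR vR c1 c2 by simp
qed

theorem theorem7:
  fixes d n :: nat
  assumes "d \<ge> 3" and "odd d" and "n = (d^2 + 1) div 2"
  shows "eff_dist n d = d"
proof -
  define M where "M = d div 2"
  have dM: "d = 2*M+1" using assms(2) unfolding M_def by simp
  have M1: "M \<ge> 1" using assms(1) dM by simp
  have "d^2 + 1 = 2 * (2*M*M+2*M+1)" unfolding dM by (simp add: power2_eq_square algebra_simps)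
  then have nM: "n = 2*M*M+2*M+1" using assms(3) by simp
  let ?S = "{wt j + wt u + wt v | j u v. bad_fault n d j u v}"
  have "\<exists>j u v. d = wt j + wt u + wt v \<and> bad_fault n d j u v"
    using witness[OF dM nM M1] by metis
  then have mem: "d \<in> ?S" by blast
  have low: "d \<le> x" if "x \<in> ?S" for x
  proof -
    from that obtain j u v where x: "x = wt j + wt u + wt v" and b: "bad_fault n d j u v" by blast
    from b have jR: "j \<in> Rn n" and uR: "u \<in> Rn n" and vR: "v \<in> Rn n"
      and alt: "(radd n u (rmul n j (1 + xpow n 1)), v) \<in> C1 n d - C2 n d \<or>
        (radd n u (rmul n j (1 + xpow n (n - d mod n))), v) \<in> C1' n d - C2' n d"
      unfolding bad_fault_def by auto
    from alt show ?thesis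
    proof
      assume "(radd n u (rmul n j (1 + xpow n 1)), v) \<in> C1 n d - C2 n d"
      then show ?thesis using X_bound[OF dM nM M1 jR uR vR] x by simp
    next
      assume "(radd n u (rmul n j (1 + xpow n (n - d mod n))), v) \<in> C1' n d - C2' n d"
      then show ?thesis using Z_bound[OF dM nM M1 jR uR vR] x by simp
    qed
  qed
  show ?thesis unfolding eff_dist_def by (rule cInf_eq_minimum[OF mem low])
qed


end
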